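(* Let $\alpha>0$ be fixed and let $\mathscr{K}$ be a convex feasible functional. Consider the augmented dual ascent scheme $$x^{n+1} = \operatorname{arg\,min}_{x} \mathscr{K}(x)+\langle x,\Lambda^n\rangle +\frac{\alpha}{2}\|x\|^2,\qquad \Lambda^{n+1} = \Lambda^{n} + \alpha\mathcal{P}_{\mathcal{M}^\perp}(x^{n+1}),\qquad \Lambda^0=0.$$ Suppose that $(\Lambda^{n})_{n=1}^\infty$ is a bounded sequence. Then $(x^{n})_{n=1}^\infty$ and $(\Lambda^{n})_{n=1}^\infty$ converge to some limits $x^\star$ and $\Lambda^\star$, where $x^\star$ is the solution to $\operatorname{arg\,min}_{x\in\mathcal{M}}\mathscr{K}(x)+\frac{\alpha}{2}\|x\|^2$.
   Context: $\mathcal{H}$ is a finite dimensional Hilbert space, $\mathcal{M}\subset\mathcal{H}$ a linear subspace, $\mathcal{P}_{\mathcal{M}^\perp}$ the orthogonal projection onto $\mathcal{M}^\perp$. A functional $\mathscr{K}:\mathcal{H}\to(-\infty,\infty]$ is called feasible if it is lower semi-continuous, proper (not identically $\infty$), bounded below, and satisfies $\lim_{\|x\|\rightarrow\infty}\mathscr{K}(x)/\|x\|=\infty$. *)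

theory Defs
  imports "HOL-Analysis.Analysis"
begin

definition orth_proj :: "'a::euclidean_space set \<Rightarrow> 'a \<Rightarrow> 'a" where
  "orth_proj S x = (THE y. y \<in> S \<and> x - y \<in> orthogonal_comp S)"

definition lsc :: "('a::topological_space \<Rightarrow> ereal) \<Rightarrow> bool" where
  "lsc K \<longleftrightarrow> (\<forall>x. K x \<le> Liminf (at x) K)"

definition feasible :: "('a::euclidean_space \<Rightarrow> ereal) \<Rightarrow> bool" where
  "feasible K \<longleftrightarrow> lsc K \<and> (\<exists>x. K x \<noteq> \<infinity>) \<and> (\<exists>c::real. \<forall>x. ereal c \<le> K x)
     \<and> ((\<lambda>x. K x / ereal (norm x)) \<longlongrightarrow> \<infinity>) at_infinity"

definition convex_ereal :: "('a::real_vector \<Rightarrow> ereal) \<Rightarrow> bool" where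
  "convex_ereal K \<longleftrightarrow> (\<forall>x y t. 0 \<le> t \<and> t \<le> 1 \<longrightarrow>
      K ((1 - t) *\<^sub>R x + t *\<^sub>R y) \<le> ereal (1 - t) * K x + ereal t * K y)"

end

theory Submission imports Defs begin

lemma orth_proj_props:
  fixes S :: "'a::euclidean_space set"
  assumes "subspace S"
  shows "orth_proj S v \<in> S \<and> v - orth_proj S v \<in> orthogonal_comp S"
proof -
  obtain y z where y: "y \<in> span S" and z: "\<And>w. w \<in> span S \<Longrightarrow> orthogonal z w" and v: "v = y + z"
    using orthogonal_subspace_decomp_exists[of S v] by blast
  have sp: "span S = S" using assms by (simp add: span_eq_iff)
  have P: "y \<in> S \<and> v - y \<in> orthogonal_comp S"
    using y z v sp by (auto simp: orthogonal_comp_def orthogonal_commute)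
  have U: "y' = y" if "y' \<in> S \<and> v - y' \<in> orthogonal_comp S" for y'
  proof -
    have a: "y' - y \<in> S" using that P assms by (simp add: subspace_diff)
    have b: "y' - y \<in> orthogonal_comp S"
    proof -
      have "(v - y) - (v - y') \<in> orthogonal_comp S"
        using that P using subspace_diff[OF subspace_orthogonal_comp] by blast
      moreover have "(v - y) - (v - y') = y' - y" by (simp add: algebra_simps)
      ultimately show ?thesis by metis
    qed
    have "inner (y' - y) (y' - y) = 0" using a b by (auto simp: orthogonal_comp_def orthogonal_def)
    thus ?thesis by simp
  qed
  have "orth_proj S v = y" unfolding orth_proj_def
    using P U by (rule the_equality) 
  thus ?thesis using P by simp
qed

lemma orth_proj_unique:
  fixes S :: "'a::euclidean_space set"
  assumes "subspace S" "y \<in> S" "v - y \<in> orthogonal_comp S"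
  shows "orth_proj S v = y"
proof -
  have P: "orth_proj S v \<in> S \<and> v - orth_proj S v \<in> orthogonal_comp S" using orth_proj_props[OF assms(1)] .
  have a: "orth_proj S v - y \<in> S" using P assms by (simp add: subspace_diff)
  have "(v - y) - (v - orth_proj S v) \<in> orthogonal_comp S"
    using assms P using subspace_diff[OF subspace_orthogonal_comp] by blast
  moreover have "(v - y) - (v - orth_proj S v) = orth_proj S v - y" by (simp add: algebra_simps)
  ultimately have b: "orth_proj S v - y \<in> orthogonal_comp S" by metis
  have "inner (orth_proj S v - y) (orth_proj S v - y) = 0" using a b by (auto simp: orthogonal_comp_def orthogonal_def)
  thus ?thesis by simp
qed

lemma orth_proj_diff:
  fixes S :: "'a::euclidean_space set"
  assumes "subspace S"
  shows "orth_proj S (a - b) = orth_proj S a - orth_proj S b"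
proof (rule orth_proj_unique[OF assms])
  show "orth_proj S a - orth_proj S b \<in> S" using orth_proj_props[OF assms] assms by (simp add: subspace_diff)
  have "(a - orth_proj S a) - (b - orth_proj S b) \<in> orthogonal_comp S"
    using orth_proj_props[OF assms] by (simp add: subspace_diff subspace_orthogonal_comp)
  thus "a - b - (orth_proj S a - orth_proj S b) \<in> orthogonal_comp S" by (simp add: algebra_simps)
qed

lemma orth_proj_inner:
  fixes S :: "'a::euclidean_space set"
  assumes "subspace S" "w \<in> S"
  shows "inner v w = inner (orth_proj S v) w"
proof -
  have "inner (v - orth_proj S v) w = 0" using orth_proj_props[OF assms(1), of v] assms(2)
    by (auto simp: orthogonal_comp_def orthogonal_def inner_commute)
  thus ?thesis by (simp add: inner_diff_left)
qed

lemma orth_proj_norm: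
  fixes S :: "'a::euclidean_space set"
  assumes "subspace S"
  shows "norm (orth_proj S v) \<le> norm v"
proof -
  have "inner (orth_proj S v) (orth_proj S v) = inner v (orth_proj S v)"
    using orth_proj_inner[OF assms, of "orth_proj S v" v] orth_proj_props[OF assms, of v] by simp
  hence "(norm v)\<^sup>2 = (norm (orth_proj S v))\<^sup>2 + (norm (v - orth_proj S v))\<^sup>2"
    by (simp add: power2_norm_eq_inner inner_diff_left inner_diff_right inner_commute)
  hence "(norm (orth_proj S v))\<^sup>2 \<le> (norm v)\<^sup>2" by simp
  thus ?thesis by (simp add: power2_le_iff_abs_le)
qed

lemma lsc_seq:
  fixes K :: "'a::euclidean_space \<Rightarrow> ereal"
  assumes "lsc K" "s \<longlonglongrightarrow> x0" "\<And>k. K (s k) \<le> ereal (B k)" "B \<longlonglongrightarrow> b"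
  shows "K x0 \<le> ereal b"
proof (rule ccontr)
  assume "\<not> K x0 \<le> ereal b"
  hence lt: "ereal b < K x0" by simp
  obtain e where e1: "b < e" and e2: "ereal e < K x0"
  proof (cases "K x0")
    case (real r) thus ?thesis using lt that[of "(b + r)/2"] by auto
  next
    case PInf thus ?thesis using that[of "b+1"] by auto
  next
    case MInf thus ?thesis using lt by auto
  qed
  have "K x0 \<le> Liminf (at x0) K" using assms(1) unfolding lsc_def by blast
  hence "eventually (\<lambda>y. ereal e < K y) (at x0)" using e2 le_Liminf_iff by blast
  hence "eventually (\<lambda>y. y \<noteq> x0 \<longrightarrow> ereal e < K y) (nhds x0)" by (simp add: eventually_at_filter)
  hence "eventually (\<lambda>y. ereal e < K y) (nhds x0)"
    by (rule eventually_mono) (use e2 in auto)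
  hence ev1: "eventually (\<lambda>k. ereal e < K (s k)) sequentially"
    using assms(2) unfolding filterlim_iff by blast
  have ev2: "eventually (\<lambda>k. B k < e) sequentially" using assms(4) e1 by (simp add: order_tendstoD)
  have "eventually (\<lambda>k. False) sequentially"
    using ev1 ev2
  proof eventually_elim
    case (elim k)
    have "ereal e < ereal (B k)" using elim(1) assms(3)[of k] by (rule less_le_trans)
    thus ?case using elim(2) by simp
  qed
  thus False by simp
qed

lemma phi_convex_identity:
  fixes u z l :: "'a::euclidean_space"
  shows "inner ((1-t) *\<^sub>R u + t *\<^sub>R z) l + \<alpha>/2*(norm ((1-t) *\<^sub>R u + t *\<^sub>R z))\<^sup>2
     = (1-t)*(inner u l + \<alpha>/2*(norm u)\<^sup>2) + t*(inner z l + \<alpha>/2*(norm z)\<^sup>2) - \<alpha>/2*t*(1-t)*(norm (z-u))\<^sup>2"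
  apply (simp add: power2_norm_eq_inner inner_add_left inner_add_right inner_diff_left inner_diff_right
        inner_commute[of z u])
  apply (simp add: field_simps)
  done

lemma eps_limit:
  fixes A B D :: real
  assumes "D \<ge> 0" "\<And>t. 0 < t \<Longrightarrow> t < 1 \<Longrightarrow> A \<le> B - (1-t)*D"
  shows "A + D \<le> B"
proof (rule ccontr)
  assume "\<not> A + D \<le> B"
  hence y: "A + D - B > 0" by simp
  show False
  proof (cases "D = 0")
    case True thus ?thesis using assms(2)[of "1/2"] y by simp
  next
    case False
    hence Dp: "D > 0" using assms(1) by simp
    define t where "t = min (1/2) ((A + D - B)/(2*D))"
    have t0: "0 < t" using y Dp by (simp add: t_def)
    have t1: "t < 1" by (simp add: t_def)
    have "t \<le> (A + D - B)/(2*D)" by (simp add: t_def)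
    hence "t * D \<le> (A + D - B)/(2*D) * D" using Dp by (intro mult_right_mono) auto
    also have "\<dots> = (A + D - B)/2" using Dp by simp
    finally have "t*D \<le> (A+D-B)/2" .
    moreover have "A \<le> B - (1-t)*D" using assms(2) t0 t1 by blast
    ultimately show False using y by (simp add: algebra_simps)
  qed
qed

lemma strong_min:
  fixes K :: "'a::euclidean_space \<Rightarrow> ereal"
  assumes cvx: "convex_ereal K" and lb: "\<And>z. ereal c \<le> K z" and a: "\<alpha> > 0"
   and am: "is_arg_min (\<lambda>z. K z + ereal (inner z l + \<alpha>/2*(norm z)\<^sup>2)) (\<lambda>_. True) u"
   and fu: "K u \<noteq> \<infinity>" and fz: "K z \<noteq> \<infinity>"
  shows "real_of_ereal (K u) + (inner u l + \<alpha>/2*(norm u)\<^sup>2) + \<alpha>/2*(norm (z-u))\<^sup>2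
     \<le> real_of_ereal (K z) + (inner z l + \<alpha>/2*(norm z)\<^sup>2)"
proof -
  define \<Phi> where "\<Phi> v = inner v l + \<alpha>/2*(norm v)\<^sup>2" for v
  obtain cu where cu: "K u = ereal cu" using fu lb[of u] by (cases "K u") auto
  obtain kz where kz: "K z = ereal kz" using fz lb[of z] by (cases "K z") auto
  have key: "cu + \<Phi> u \<le> kz + \<Phi> z - (1-t)*(\<alpha>/2*(norm (z-u))\<^sup>2)" if t: "0 < t" "t < 1" for t
  proof -
    define w where "w = (1-t) *\<^sub>R u + t *\<^sub>R z"
    have "K w \<le> ereal (1-t) * K u + ereal t * K z"
      using cvx t unfolding convex_ereal_def w_def by simp
    hence Kw: "K w \<le> ereal ((1-t)*cu + t*kz)" using cu kz by simp
    have "\<not> K w + ereal (\<Phi> w) < K u + ereal (\<Phi> u)"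
      using am unfolding is_arg_min_def \<Phi>_def by blast
    hence "K u + ereal (\<Phi> u) \<le> K w + ereal (\<Phi> w)" by simp
    also have "\<dots> \<le> ereal ((1-t)*cu + t*kz) + ereal (\<Phi> w)" using Kw by (rule add_right_mono)
    finally have "cu + \<Phi> u \<le> (1-t)*cu + t*kz + \<Phi> w" using cu by simp
    moreover have "\<Phi> w = (1-t)*\<Phi> u + t*\<Phi> z - \<alpha>/2*t*(1-t)*(norm (z-u))\<^sup>2"
      unfolding \<Phi>_def w_def by (rule phi_convex_identity)
    ultimately have "t*(cu + \<Phi> u) \<le> t*(kz + \<Phi> z - (1-t)*(\<alpha>/2*(norm (z-u))\<^sup>2))"
      by (simp add: algebra_simps)
    thus ?thesis using t by simp
  qed
  have "cu + \<Phi> u + \<alpha>/2*(norm (z-u))\<^sup>2 \<le> kz + \<Phi> z"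
    by (rule eps_limit) (use a key in auto)
  thus ?thesis using cu kz by (simp add: \<Phi>_def)
qed

lemma sq_lim:
  fixes f :: "nat \<Rightarrow> 'a::real_normed_vector"
  assumes "(\<lambda>n. (norm (f n - l))\<^sup>2) \<longlonglongrightarrow> 0"
  shows "f \<longlonglongrightarrow> l"
proof -
  have "(\<lambda>n. sqrt ((norm (f n - l))\<^sup>2)) \<longlonglongrightarrow> sqrt 0" using assms by (rule tendsto_real_sqrt)
  hence "(\<lambda>n. norm (f n - l)) \<longlonglongrightarrow> 0" by simp
  hence "(\<lambda>n. f n - l) \<longlonglongrightarrow> 0" by (simp add: tendsto_norm_zero_iff)
  thus ?thesis by (rule LIM_zero_cancel)
qed

lemma squeeze0:
  fixes g h :: "nat \<Rightarrow> real"
  assumes "\<And>n. 0 \<le> c * g n" "\<And>n. c * g n \<le> h n" "h \<longlonglongrightarrow> 0" "c > 0"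
  shows "g \<longlonglongrightarrow> 0"
proof -
  have "(\<lambda>n. c * g n) \<longlonglongrightarrow> 0"
    by (rule tendsto_sandwich[of "\<lambda>_. 0" _ _ h]) (use assms in auto)
  hence "(\<lambda>n. (1/c) * (c * g n)) \<longlonglongrightarrow> (1/c) * 0" by (intro tendsto_mult_left)
  thus ?thesis using assms(4) by simp
qed

theorem theorem4:
  fixes K :: "'a::euclidean_space \<Rightarrow> ereal"
    and M :: "'a set"
    and \<alpha> :: real
    and x \<Lambda> :: "nat \<Rightarrow> 'a"
  assumes "subspace M"
    and "\<alpha> > 0"
    and "feasible K"
    and "convex_ereal K"
    and "\<Lambda> 0 = 0"
    and "\<And>n. is_arg_min (\<lambda>z. K z + ereal (inner z (\<Lambda> n) + \<alpha> / 2 * (norm z)\<^sup>2))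
                 (\<lambda>_. True) (x (Suc n))"
    and "\<And>n. \<Lambda> (Suc n) = \<Lambda> n + \<alpha> *\<^sub>R orth_proj (orthogonal_comp M) (x (Suc n))"
    and "bounded (range (\<lambda>n. \<Lambda> (Suc n)))"
  shows "\<exists>xs Ls. x \<longlonglongrightarrow> xs \<and> \<Lambda> \<longlonglongrightarrow> Ls \<and>
           is_arg_min (\<lambda>z. K z + ereal (\<alpha> / 2 * (norm z)\<^sup>2)) (\<lambda>z. z \<in> M) xs"
proof -
  note sM = assms(1) and a = assms(2) and cvx = assms(4) and L0 = assms(5) and am = assms(6)
    and Lrec = assms(7)
  define N where "N = orthogonal_comp M"
  define Q where "Q = orth_proj N"
  define y where "y n = x (Suc n)" for n
  define kr where "kr z = real_of_ereal (K z)" for z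
  have sN: "subspace N" unfolding N_def by (rule subspace_orthogonal_comp)
  have NN: "orthogonal_comp N = M" unfolding N_def using sM by (rule orthogonal_comp_self)
  have QN: "Q v \<in> N" for v unfolding Q_def using orth_proj_props[OF sN] by blast
  have Qdiff: "Q (v - w) = Q v - Q w" for v w unfolding Q_def by (rule orth_proj_diff[OF sN])
  have Qinner: "w \<in> N \<Longrightarrow> inner v w = inner (Q v) w" for v w unfolding Q_def by (rule orth_proj_inner[OF sN])
  have Qnorm: "norm (Q v) \<le> norm v" for v unfolding Q_def by (rule orth_proj_norm[OF sN])
  have Qperp: "v - Q v \<in> M" for v using orth_proj_props[OF sN, of v] NN by (simp add: Q_def)
  have MN: "v \<in> M \<Longrightarrow> w \<in> N \<Longrightarrow> inner v w = 0" for v w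
    by (auto simp: N_def orthogonal_comp_def orthogonal_def)
  have Lrec': "\<Lambda> (Suc n) = \<Lambda> n + \<alpha> *\<^sub>R Q (y n)" for n using Lrec by (simp add: Q_def N_def y_def)
  have LN: "\<Lambda> n \<in> N" for n
  proof (induction n)
    case 0 thus ?case using L0 sN by (simp add: subspace_0)
  next
    case (Suc n) thus ?case using Lrec'[of n] sN QN by (simp add: subspace_add subspace_scale)
  qed
  obtain c where lb: "\<And>z. ereal c \<le> K z" using assms(3) unfolding feasible_def by blast
  obtain z0 where z0: "K z0 \<noteq> \<infinity>" using assms(3) unfolding feasible_def by blast
  have lscK: "lsc K" using assms(3) unfolding feasible_def by blast
  have Kfin: "K v = ereal (kr v)" if "K v \<noteq> \<infinity>" for v
    using that lb[of v] unfolding kr_def by (cases "K v") auto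
  have finy: "K (y n) \<noteq> \<infinity>" for n
  proof
    assume inf: "K (y n) = \<infinity>"
    have "\<not> K z0 + ereal (inner z0 (\<Lambda> n) + \<alpha> / 2 * (norm z0)\<^sup>2)
           < K (y n) + ereal (inner (y n) (\<Lambda> n) + \<alpha> / 2 * (norm (y n))\<^sup>2)"
      using am[of n] unfolding is_arg_min_def y_def by blast
    thus False using inf Kfin[OF z0] by simp
  qed
  have Ineq: "kr (y n) + (inner (y n) (\<Lambda> n) + \<alpha>/2*(norm (y n))\<^sup>2) + \<alpha>/2*(norm (z - y n))\<^sup>2
     \<le> kr z + (inner z (\<Lambda> n) + \<alpha>/2*(norm z)\<^sup>2)" if "K z \<noteq> \<infinity>" for n z
    unfolding kr_def
    by (rule strong_min[OF cvx lb a]) (use am[of n] finy[of n] that in \<open>simp_all add: y_def\<close>)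
  have bL: "bounded (range \<Lambda>)"
  proof -
    have "range \<Lambda> \<subseteq> insert (\<Lambda> 0) (range (\<lambda>n. \<Lambda> (Suc n)))"
    proof
      fix v assume "v \<in> range \<Lambda>"
      then obtain n where v: "v = \<Lambda> n" by blast
      show "v \<in> insert (\<Lambda> 0) (range (\<lambda>n. \<Lambda> (Suc n)))"
        using v by (cases n) auto
    qed
    thus ?thesis using assms(8) by (metis bounded_insert bounded_subset)
  qed
  then obtain BL where BL: "\<And>n. norm (\<Lambda> n) \<le> BL" unfolding bounded_iff by blast
  have BL0: "0 \<le> BL" using BL[of 0] norm_ge_zero order_trans by blast
  have ybd: "norm (y n - y 0) \<le> BL / \<alpha>" for n
  proof -
    have i1: "kr (y n) + (inner (y n) (\<Lambda> n) + \<alpha>/2*(norm (y n))\<^sup>2) + \<alpha>/2*(norm (y 0 - y n))\<^sup>2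
     \<le> kr (y 0) + (inner (y 0) (\<Lambda> n) + \<alpha>/2*(norm (y 0))\<^sup>2)" using Ineq finy by blast
    have i2: "kr (y 0) + (inner (y 0) (\<Lambda> 0) + \<alpha>/2*(norm (y 0))\<^sup>2) + \<alpha>/2*(norm (y n - y 0))\<^sup>2
     \<le> kr (y n) + (inner (y n) (\<Lambda> 0) + \<alpha>/2*(norm (y n))\<^sup>2)" using Ineq finy by blast
    have "norm (y 0 - y n) = norm (y n - y 0)" by (rule norm_minus_commute)
    hence h: "\<alpha> * (norm (y n - y 0))\<^sup>2 \<le> inner (y 0 - y n) (\<Lambda> n)"
      using i1 i2 L0 by (simp add: inner_diff_left)
    also have "\<dots> \<le> norm (y 0 - y n) * norm (\<Lambda> n)" by (rule norm_cauchy_schwarz)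
    also have "\<dots> \<le> norm (y n - y 0) * BL" by (simp add: norm_minus_commute BL mult_left_mono)
    finally have h2: "\<alpha> * (norm (y n - y 0))\<^sup>2 \<le> norm (y n - y 0) * BL" .
    show ?thesis
    proof (cases "norm (y n - y 0) = 0")
      case True thus ?thesis using BL0 a by simp
    next
      case False
      hence p: "norm (y n - y 0) > 0" by simp
      have "norm (y n - y 0) * (\<alpha> * norm (y n - y 0)) \<le> norm (y n - y 0) * BL"
        using h2 by (simp add: power2_eq_square algebra_simps)
      hence "\<alpha> * norm (y n - y 0) \<le> BL" using p by simp
      thus ?thesis using a by (simp add: field_simps)
    qed
  qed
  have bdy: "bounded (range y)"
    unfolding bounded_iff
  proof (intro exI allI ballI)
    fix v assume "v \<in> range y"
    then obtain n where v: "v = y n" by blast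
    have "norm (y n) \<le> norm (y 0) + norm (y n - y 0)" by (metis norm_triangle_sub add.commute)
    thus "norm v \<le> norm (y 0) + BL / \<alpha>" using ybd[of n] v by simp
  qed
  have byL: "bounded (range (\<lambda>n. (y n, \<Lambda> n)))"
    by (rule bounded_subset[OF bounded_Times[OF bdy bL]]) auto
  obtain l r where r: "strict_mono r" and lim: "((\<lambda>n. (y n, \<Lambda> n)) \<circ> r) \<longlonglongrightarrow> l"
    using bounded_imp_convergent_subsequence[OF byL] by blast
  define xb where "xb = fst l"
  define lb where "lb = snd l"
  have yr: "(\<lambda>k. y (r k)) \<longlonglongrightarrow> xb" using tendsto_fst[OF lim] by (simp add: xb_def o_def)
  have Lr: "(\<lambda>k. \<Lambda> (r k)) \<longlonglongrightarrow> lb" using tendsto_snd[OF lim] by (simp add: lb_def o_def)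
  define G where "G n = kr (y n) + (inner (y n) (\<Lambda> n) + \<alpha>/2*(norm (y n))\<^sup>2)" for n
  have Gup: "G n \<le> kr z0 + norm z0 * BL + \<alpha>/2*(norm z0)\<^sup>2" for n
  proof -
    have "G n + \<alpha>/2*(norm (z0 - y n))\<^sup>2 \<le> kr z0 + (inner z0 (\<Lambda> n) + \<alpha>/2*(norm z0)\<^sup>2)"
      using Ineq[OF z0, of n] by (simp add: G_def)
    moreover have "inner z0 (\<Lambda> n) \<le> norm z0 * BL"
      using norm_cauchy_schwarz[of z0 "\<Lambda> n"] BL[of n] by (meson mult_left_mono norm_ge_zero order_trans)
    moreover have "0 \<le> \<alpha>/2*(norm (z0 - y n))\<^sup>2" using a by simp
    ultimately show ?thesis by linarith
  qed
  have Ginc: "G n + \<alpha>/2*(norm (Q (y n)))\<^sup>2 \<le> G (Suc n)" for n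
  proof -
    define p where "p = Q (y n)"
    define q where "q = Q (y (Suc n))"
    define d where "d = y (Suc n) - y n"
    have A: "G n + \<alpha>/2*(norm d)\<^sup>2 \<le> kr (y (Suc n)) + (inner (y (Suc n)) (\<Lambda> n) + \<alpha>/2*(norm (y (Suc n)))\<^sup>2)"
      using Ineq[OF finy, of n "Suc n"] by (simp add: G_def d_def)
    have ip: "inner (y (Suc n)) p = inner q p" unfolding q_def p_def by (rule Qinner[OF QN])
    have B: "G (Suc n) = kr (y (Suc n)) + (inner (y (Suc n)) (\<Lambda> n) + \<alpha>/2*(norm (y (Suc n)))\<^sup>2) + \<alpha> * inner q p"
      unfolding G_def using Lrec'[of n] ip by (simp add: inner_add_right p_def)
    have qp: "q - p = Q d" unfolding q_def p_def d_def by (simp add: Qdiff)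
    have e1: "(norm (q - p))\<^sup>2 + 2*inner q p = (norm q)\<^sup>2 + (norm p)\<^sup>2"
      by (simp add: power2_norm_eq_inner inner_diff_left inner_diff_right inner_commute)
    have e2: "(norm (q - p))\<^sup>2 \<le> (norm d)\<^sup>2" using qp Qnorm[of d] by (simp add: power_mono)
    have e3: "\<alpha>*(norm (q - p))\<^sup>2 \<le> \<alpha>*(norm d)\<^sup>2" using e2 a by simp
    have e4: "\<alpha>*(norm (q - p))\<^sup>2 + 2*\<alpha>*inner q p = \<alpha>*(norm q)\<^sup>2 + \<alpha>*(norm p)\<^sup>2"
      using arg_cong[OF e1, of "\<lambda>t. \<alpha>*t"] by (simp add: algebra_simps)
    have e5: "0 \<le> \<alpha>*(norm q)\<^sup>2" using a by simp
    show ?thesis using A B e3 e4 e5 unfolding p_def[symmetric] by linarith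
  qed
  have incG: "incseq G" unfolding incseq_Suc_iff
  proof
    fix n show "G n \<le> G (Suc n)" proof -
      have "0 \<le> \<alpha>/2*(norm (Q (y n)))\<^sup>2" using a by simp
      thus ?thesis using Ginc[of n] by linarith
    qed
  qed
  have bddG: "bdd_above (range G)" by (rule bdd_aboveI2, rule Gup)
  have Glim: "G \<longlonglongrightarrow> (SUP i. G i)" by (rule LIMSEQ_incseq_SUP[OF bddG incG])
  have Gdiff: "(\<lambda>n. G (Suc n) - G n) \<longlonglongrightarrow> 0"
    using tendsto_diff[OF LIMSEQ_Suc[OF Glim] Glim] by simp
  have Qsq: "(\<lambda>n. (norm (Q (y n) - 0))\<^sup>2) \<longlonglongrightarrow> 0"
  proof (rule squeeze0[of "\<alpha>/2" _ "\<lambda>n. G (Suc n) - G n"])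
    fix n
    show "0 \<le> \<alpha>/2 * (norm (Q (y n) - 0))\<^sup>2" using a by simp
    show "\<alpha>/2 * (norm (Q (y n) - 0))\<^sup>2 \<le> G (Suc n) - G n" using Ginc[of n] by simp
  qed (use a Gdiff in auto)
  have Qy0: "(\<lambda>n. Q (y n)) \<longlonglongrightarrow> 0" by (rule sq_lim[OF Qsq])
  have lbN: "lb \<in> N"
    using closed_sequentially[OF closed_subspace[OF sN] _ Lr] LN by blast
  have Qr1: "(\<lambda>k. Q (y (r k))) \<longlonglongrightarrow> 0"
    using LIMSEQ_subseq_LIMSEQ[OF Qy0 r] by (simp add: o_def)
  have Qr2: "(\<lambda>k. Q (y (r k)) - Q xb) \<longlonglongrightarrow> 0"
  proof (rule Lim_null_comparison)
    show "\<forall>\<^sub>F k in sequentially. norm (Q (y (r k)) - Q xb) \<le> norm (y (r k) - xb)"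
      by (intro always_eventually allI) (metis Qdiff Qnorm)
    show "(\<lambda>k. norm (y (r k) - xb)) \<longlonglongrightarrow> 0"
      using yr by (simp add: tendsto_norm_zero_iff LIM_zero)
  qed
  have "(\<lambda>k. Q (y (r k))) \<longlonglongrightarrow> Q xb" using Qr2 by (rule LIM_zero_cancel)
  hence Qxb: "Q xb = 0" using Qr1 LIMSEQ_unique by blast
  have xbM: "xb \<in> M" using Qperp[of xb] Qxb by simp
  have OptE: "K xb \<le> ereal (kr z + (inner z lb + \<alpha>/2*(norm z)\<^sup>2) - (inner xb lb + \<alpha>/2*(norm xb)\<^sup>2) - \<alpha>/2*(norm (z - xb))\<^sup>2)"
    if fz: "K z \<noteq> \<infinity>" for z
  proof (rule lsc_seq[OF lscK yr])
    fix k
    show "K (y (r k)) \<le> ereal (kr z + (inner z (\<Lambda> (r k)) + \<alpha>/2*(norm z)\<^sup>2) - (inner (y (r k)) (\<Lambda> (r k)) + \<alpha>/2*(norm (y (r k)))\<^sup>2) - \<alpha>/2*(norm (z - y (r k)))\<^sup>2)"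
      using Ineq[OF fz, of "r k"] Kfin[OF finy[of "r k"]] by simp
    show "(\<lambda>k. kr z + (inner z (\<Lambda> (r k)) + \<alpha>/2*(norm z)\<^sup>2) - (inner (y (r k)) (\<Lambda> (r k)) + \<alpha>/2*(norm (y (r k)))\<^sup>2) - \<alpha>/2*(norm (z - y (r k)))\<^sup>2)
       \<longlonglongrightarrow> kr z + (inner z lb + \<alpha>/2*(norm z)\<^sup>2) - (inner xb lb + \<alpha>/2*(norm xb)\<^sup>2) - \<alpha>/2*(norm (z - xb))\<^sup>2"
      using yr Lr by (intro tendsto_intros)
  qed
  have finxb: "K xb \<noteq> \<infinity>"
  proof
    assume "K xb = \<infinity>" thus False using OptE[OF z0] by simp
  qed
  have Opt: "kr xb + (inner xb lb + \<alpha>/2*(norm xb)\<^sup>2) + \<alpha>/2*(norm (z - xb))\<^sup>2 \<le> kr z + (inner z lb + \<alpha>/2*(norm z)\<^sup>2)"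
    if fz: "K z \<noteq> \<infinity>" for z
    using OptE[OF fz] Kfin[OF finxb] by simp
  define D where "D n = (norm (\<Lambda> n - lb))\<^sup>2" for n
  have Fej: "D (Suc n) + \<alpha>\<^sup>2 * (norm (y n - xb))\<^sup>2 \<le> D n" for n
  proof -
    define p where "p = Q (y n)"
    define E where "E = norm (y n - xb)"
    have i1: "kr (y n) + (inner (y n) (\<Lambda> n) + \<alpha>/2*(norm (y n))\<^sup>2) + \<alpha>/2*(norm (xb - y n))\<^sup>2
       \<le> kr xb + (inner xb (\<Lambda> n) + \<alpha>/2*(norm xb)\<^sup>2)" using Ineq[OF finxb] .
    have i2: "kr xb + (inner xb lb + \<alpha>/2*(norm xb)\<^sup>2) + \<alpha>/2*(norm (y n - xb))\<^sup>2
       \<le> kr (y n) + (inner (y n) lb + \<alpha>/2*(norm (y n))\<^sup>2)" using Opt[OF finy] .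
    have z1: "inner xb (\<Lambda> n) = 0" using MN[OF xbM LN] .
    have z2: "inner xb lb = 0" using MN[OF xbM lbN] .
    have nc: "norm (xb - y n) = E" unfolding E_def by (rule norm_minus_commute)
    have h: "inner (y n) (\<Lambda> n - lb) \<le> - \<alpha> * E\<^sup>2"
      using i1 i2 z1 z2 nc unfolding E_def[symmetric] by (simp add: inner_diff_right)
    have dN: "\<Lambda> n - lb \<in> N" using sN LN lbN by (simp add: subspace_diff)
    have h2: "inner p (\<Lambda> n - lb) \<le> - \<alpha> * E\<^sup>2"
      using h Qinner[OF dN, of "y n"] by (simp add: p_def)
    have pn: "norm p \<le> E" unfolding p_def E_def
      using Qnorm[of "y n - xb"] Qdiff[of "y n" xb] Qxb by simp
    have pn2: "(norm p)\<^sup>2 \<le> E\<^sup>2" using pn by (simp add: power_mono)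
    have exp: "D (Suc n) = D n + 2*\<alpha>*inner p (\<Lambda> n - lb) + \<alpha>\<^sup>2*(norm p)\<^sup>2"
      unfolding D_def Lrec'[of n] p_def[symmetric]
      apply (simp only: power2_norm_eq_inner)
      apply (simp add: inner_add_left inner_add_right inner_diff_left inner_diff_right
          inner_commute algebra_simps power2_eq_square)
      done
    have h3: "2*\<alpha>*inner p (\<Lambda> n - lb) \<le> 2*\<alpha>*(- \<alpha> * E\<^sup>2)"
      using h2 a by (intro mult_left_mono) auto
    have h4: "\<alpha>\<^sup>2*(norm p)\<^sup>2 \<le> \<alpha>\<^sup>2*E\<^sup>2" using pn2 by (intro mult_left_mono) auto
    have "2*\<alpha>*(- \<alpha> * E\<^sup>2) = -2 * (\<alpha>\<^sup>2*E\<^sup>2)" by (simp add: power2_eq_square algebra_simps)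
    thus ?thesis using exp h3 h4 unfolding E_def by linarith
  qed
  have D0: "0 \<le> D n" for n unfolding D_def by simp
  have Ddec: "decseq D" unfolding decseq_Suc_iff
  proof
    fix n show "D (Suc n) \<le> D n" using Fej[of n] by (smt (verit) zero_le_power2 mult_nonneg_nonneg)
  qed
  have bddD: "bdd_below (range D)" by (rule bdd_belowI2, rule D0)
  have Dlim: "D \<longlonglongrightarrow> (INF i. D i)" by (rule LIMSEQ_decseq_INF[OF bddD Ddec])
  have Dr: "(\<lambda>k. D (r k)) \<longlonglongrightarrow> 0"
  proof -
    have "(\<lambda>k. \<Lambda> (r k) - lb) \<longlonglongrightarrow> 0" using Lr by (rule LIM_zero)
    hence "(\<lambda>k. norm (\<Lambda> (r k) - lb)) \<longlonglongrightarrow> 0" by (simp add: tendsto_norm_zero_iff)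
    hence "(\<lambda>k. (norm (\<Lambda> (r k) - lb))\<^sup>2) \<longlonglongrightarrow> 0\<^sup>2" by (rule tendsto_power)
    thus ?thesis by (simp add: D_def)
  qed
  have "(\<lambda>k. D (r k)) \<longlonglongrightarrow> (INF i. D i)" using LIMSEQ_subseq_LIMSEQ[OF Dlim r] by (simp add: o_def)
  hence "(INF i. D i) = 0" using Dr LIMSEQ_unique by blast
  hence Dl: "D \<longlonglongrightarrow> 0" using Dlim by simp
  have Lconv: "\<Lambda> \<longlonglongrightarrow> lb" by (rule sq_lim) (use Dl in \<open>simp only: D_def[abs_def]\<close>)
  have ddiff: "(\<lambda>n. D n - D (Suc n)) \<longlonglongrightarrow> 0"
    using tendsto_diff[OF Dl LIMSEQ_Suc[OF Dl]] by simp
  have ysq: "(\<lambda>n. (norm (y n - xb))\<^sup>2) \<longlonglongrightarrow> 0"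
  proof (rule squeeze0[of "\<alpha>\<^sup>2" _ "\<lambda>n. D n - D (Suc n)"])
    fix n
    show "0 \<le> \<alpha>\<^sup>2 * (norm (y n - xb))\<^sup>2" by simp
    show "\<alpha>\<^sup>2 * (norm (y n - xb))\<^sup>2 \<le> D n - D (Suc n)" using Fej[of n] by simp
  qed (use a ddiff in auto)
  have "y \<longlonglongrightarrow> xb" by (rule sq_lim[OF ysq])
  hence xconv: "x \<longlonglongrightarrow> xb" unfolding y_def by (rule LIMSEQ_imp_Suc)
  have amin: "is_arg_min (\<lambda>z. K z + ereal (\<alpha> / 2 * (norm z)\<^sup>2)) (\<lambda>z. z \<in> M) xb"
    unfolding is_arg_min_def
  proof (intro conjI xbM notI)
    assume "\<exists>w. w \<in> M \<and> K w + ereal (\<alpha> / 2 * (norm w)\<^sup>2) < K xb + ereal (\<alpha> / 2 * (norm xb)\<^sup>2)"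
    then obtain w where wM: "w \<in> M" and lt: "K w + ereal (\<alpha> / 2 * (norm w)\<^sup>2) < K xb + ereal (\<alpha> / 2 * (norm xb)\<^sup>2)"
      by blast
    have fw: "K w \<noteq> \<infinity>" using lt by auto
    have "kr xb + (inner xb lb + \<alpha>/2*(norm xb)\<^sup>2) + \<alpha>/2*(norm (w - xb))\<^sup>2 \<le> kr w + (inner w lb + \<alpha>/2*(norm w)\<^sup>2)"
      using Opt[OF fw] .
    moreover have "inner w lb = 0" using MN[OF wM lbN] .
    moreover have "inner xb lb = 0" using MN[OF xbM lbN] .
    moreover have "0 \<le> \<alpha>/2*(norm (w - xb))\<^sup>2" using a by simp
    ultimately have "kr xb + \<alpha>/2*(norm xb)\<^sup>2 \<le> kr w + \<alpha>/2*(norm w)\<^sup>2" by linarith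
    thus False using lt Kfin[OF fw] Kfin[OF finxb] by simp
  qed
  show ?thesis using xconv Lconv amin by blast
qed
end
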